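(* Let $\lambda<0$, $a,b>0$ with $-b<\frac{\lambda}{2}$. (a) Let $\epsilon>0$. If $X\sim\mathrm{K}(\lambda,a\epsilon,b;1,\epsilon^{-1})$ and $Y\sim\mathrm{Ga}(-\lambda,a\epsilon)$ are independent and $(U,V)=\tilde F^\epsilon_{\mathrm{K\text{-}Ga},A}(X,Y)$, then $U,V$ are independent with $U\sim\mathrm{K}(-\lambda,a\epsilon,b;1,\epsilon^{-1})$ and $V\sim\mathrm{Be}'(b+\frac{\lambda}{2},-\lambda)$. (b) If $X\sim\mathrm{Ga}(b+\frac{\lambda}{2},a)$ and $Y\sim\mathrm{Ga}(-\lambda,a)$ are independent and $(U,V)=F^+_{\mathrm{Ga}}(X,Y)$, then $U,V$ are independent with $U\sim\mathrm{Ga}(b-\frac{\lambda}{2},a)$ and $V\sim\mathrm{Be}'(b+\frac{\lambda}{2},-\lambda)$.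
   Context: $\mathbb{R}_+=(0,\infty)$. For $p,q>0$, $a>0$, $-b<\frac{\lambda}{2}$: $\mathrm{K}(\lambda,a,b;p,q)$ has density on $\mathbb{R}_+$ proportional to $x^{\lambda-1}e^{-apx}(1+qx^{-1})^{-b+\frac{\lambda}{2}}$. $\mathrm{Ga}(A,C)$ ($A,C>0$) has density proportional to $x^{A-1}e^{-Cx}$. $\mathrm{Be}'(A,B)$ ($A,B>0$) has density proportional to $x^{A-1}(1+x)^{-A-B}$. $\tilde F^\epsilon_{\mathrm{K\text{-}Ga},A}(x,y)=\left(x+y,\ \frac{x(1+\epsilon x+\epsilon y)}{y}\right)$ and $F^+_{\mathrm{Ga}}(x,y)=\left(x+y,\ \frac{x}{y}\right)$, maps on $\mathbb{R}_+^2$. *)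

theory Defs
  imports "HOL-Probability.Probability"
begin

definition normalized_density :: "(real \<Rightarrow> real) \<Rightarrow> real \<Rightarrow> ennreal" where
  "normalized_density g x = ennreal (g x / (LINT t|lborel. g t))"

definition K_kernel :: "real \<Rightarrow> real \<Rightarrow> real \<Rightarrow> real \<Rightarrow> real \<Rightarrow> real \<Rightarrow> real" where
  "K_kernel lam a b p q x =
     (if 0 < x then x powr (lam - 1) * exp (- a * p * x) * (1 + q / x) powr (- b + lam / 2) else 0)"

definition K_density :: "real \<Rightarrow> real \<Rightarrow> real \<Rightarrow> real \<Rightarrow> real \<Rightarrow> real \<Rightarrow> ennreal" where
  "K_density lam a b p q = normalized_density (K_kernel lam a b p q)"

definition Ga_kernel :: "real \<Rightarrow> real \<Rightarrow> real \<Rightarrow> real" where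
  "Ga_kernel A C x = (if 0 < x then x powr (A - 1) * exp (- C * x) else 0)"

definition Ga_density :: "real \<Rightarrow> real \<Rightarrow> real \<Rightarrow> ennreal" where
  "Ga_density A C = normalized_density (Ga_kernel A C)"

definition BetaPrime_kernel :: "real \<Rightarrow> real \<Rightarrow> real \<Rightarrow> real" where
  "BetaPrime_kernel A B x = (if 0 < x then x powr (A - 1) * (1 + x) powr (- A - B) else 0)"

definition BetaPrime_density :: "real \<Rightarrow> real \<Rightarrow> real \<Rightarrow> ennreal" where
  "BetaPrime_density A B = normalized_density (BetaPrime_kernel A B)"

definition F_KGa_A :: "real \<Rightarrow> real \<times> real \<Rightarrow> real \<times> real" where
  "F_KGa_A eps xy = (case xy of (x, y) \<Rightarrow> (x + y, x * (1 + eps * x + eps * y) / y))"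

definition F_Ga_plus :: "real \<times> real \<Rightarrow> real \<times> real" where
  "F_Ga_plus xy = (case xy of (x, y) \<Rightarrow> (x + y, x / y))"

end

theory Submission
  imports Defs
begin






lemma joint_density_indep:
  fixes U V :: "'a \<Rightarrow> real"
  assumes M: "prob_space M" and U[measurable]: "U \<in> borel_measurable M" and V[measurable]: "V \<in> borel_measurable M"
   and p[measurable]: "p \<in> borel_measurable lborel" and q[measurable]: "q \<in> borel_measurable lborel"
   and p1: "(\<integral>\<^sup>+x. p x \<partial>lborel) = 1" and q1: "(\<integral>\<^sup>+x. q x \<partial>lborel) = 1"
   and J: "distr M (lborel \<Otimes>\<^sub>M lborel) (\<lambda>\<omega>. (U \<omega>, V \<omega>)) = density (lborel \<Otimes>\<^sub>M lborel) (\<lambda>(u,v). p u * q v)"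
  shows "prob_space.indep_var M borel U borel V \<and> distributed M lborel U p \<and> distributed M lborel V q"
proof -
  interpret prob_space M by fact
  have Pp: "prob_space (density lborel p)"
    by (rule prob_spaceI) (simp add: emeasure_density p1)
  have Pq: "prob_space (density lborel q)"
    by (rule prob_spaceI) (simp add: emeasure_density q1)
  interpret Pp: prob_space "density lborel p" by fact
  interpret Pq: prob_space "density lborel q" by fact
  interpret PP: pair_sigma_finite "density lborel p" "density lborel q" ..
  have prod: "density lborel p \<Otimes>\<^sub>M density lborel q = density (lborel \<Otimes>\<^sub>M lborel) (\<lambda>(u,v). p u * q v)"
    by (rule pair_measure_density) (auto intro: Pq.sigma_finite_measure_axioms lborel.sigma_finite_measure_axioms)
  have dU: "distr M lborel U = density lborel p"
  proof -
    have "distr M lborel U = distr (distr M (lborel \<Otimes>\<^sub>M lborel) (\<lambda>\<omega>. (U \<omega>, V \<omega>))) lborel fst"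
      by (subst distr_distr) (auto simp: comp_def)
    also have "\<dots> = distr (density lborel p \<Otimes>\<^sub>M density lborel q) (density lborel p) fst"
      unfolding J prod by (rule distr_cong) auto
    also have "\<dots> = density lborel p" by (rule Pq.distr_pair_fst)
    finally show ?thesis .
  qed
  have dV: "distr M lborel V = density lborel q"
  proof -
    interpret QP: pair_sigma_finite "density lborel q" "density lborel p" ..
    have "distr M lborel V = distr (distr M (lborel \<Otimes>\<^sub>M lborel) (\<lambda>\<omega>. (U \<omega>, V \<omega>))) lborel snd"
      by (subst distr_distr) (auto simp: comp_def)
    also have "\<dots> = distr (density lborel p \<Otimes>\<^sub>M density lborel q) (density lborel q) snd"
      unfolding J prod by (rule distr_cong) auto
    also have "\<dots> = distr (distr (density lborel q \<Otimes>\<^sub>M density lborel p) (density lborel p \<Otimes>\<^sub>M density lborel q) (\<lambda>(x, y). (y, x))) (density lborel q) snd"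
      by (simp only: PP.distr_pair_swap[symmetric])
    also have "\<dots> = distr (density lborel q \<Otimes>\<^sub>M density lborel p) (density lborel q) fst"
      by (subst distr_distr) (auto simp: comp_def split_beta intro!: distr_cong)
    also have "\<dots> = density lborel q" by (rule Pp.distr_pair_fst)
    finally show ?thesis .
  qed
  have "indep_var borel U borel V"
  proof (subst indep_var_distribution_eq, intro conjI)
    show "distr M borel U \<Otimes>\<^sub>M distr M borel V = distr M (borel \<Otimes>\<^sub>M borel) (\<lambda>x. (U x, V x))"
    proof -
      have "distr M borel U = distr M lborel U" "distr M borel V = distr M lborel V"
        by (auto intro!: distr_cong)
      moreover have "distr M (borel \<Otimes>\<^sub>M borel) (\<lambda>x. (U x, V x)) = distr M (lborel \<Otimes>\<^sub>M lborel) (\<lambda>x. (U x, V x))"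
        by (intro distr_cong) (auto intro!: sets_pair_measure_cong)
      ultimately show ?thesis using dU dV J prod by simp
    qed
  qed auto
  then show ?thesis using dU dV by (auto simp: distributed_def)
qed



definition Dens :: "real \<Rightarrow> (real \<Rightarrow> ennreal) \<Rightarrow> (real \<Rightarrow> ennreal) \<Rightarrow> real \<Rightarrow> real \<Rightarrow> ennreal" where
  "Dens eps F G u v = ennreal (1/(1+eps*u)) * ennreal (1/(1+v/(1+eps*u))) * ennreal (u/(1+v/(1+eps*u)))
     * F ((v/(1+eps*u)) * (u/(1+v/(1+eps*u)))) * G (u/(1+v/(1+eps*u)))"

lemma core:
  fixes F G :: "real \<Rightarrow> ennreal" and \<phi> :: "real \<times> real \<Rightarrow> ennreal" and eps :: real
  assumes Fm[measurable]: "F \<in> borel_measurable borel" and Gm[measurable]: "G \<in> borel_measurable borel"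
    and phim[measurable]: "\<phi> \<in> borel_measurable (lborel \<Otimes>\<^sub>M lborel)"
    and F0: "\<And>x. x \<le> 0 \<Longrightarrow> F x = 0" and G0: "\<And>y. y \<le> 0 \<Longrightarrow> G y = 0" and eps: "eps \<ge> 0"
  shows "(\<integral>\<^sup>+z. \<phi> (fst z + snd z, fst z * (1 + eps * fst z + eps * snd z) / snd z) * (F (fst z) * G (snd z)) \<partial>(lborel \<Otimes>\<^sub>M lborel))
       = (\<integral>\<^sup>+z. \<phi> z * Dens eps F G (fst z) (snd z) \<partial>(lborel \<Otimes>\<^sub>M lborel))"
proof -
  interpret lborel_pair: pair_sigma_finite lborel lborel ..
  define f0 where "f0 x y = \<phi> (x + y, x * (1 + eps * x + eps * y) / y) * (F x * G y)" for x y
  have f0m[measurable]: "(\<lambda>(x,y). f0 x y) \<in> borel_measurable (lborel \<Otimes>\<^sub>M lborel)"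
    unfolding f0_def by measurable
  define A where "A w y = ennreal y * f0 (w*y) y" for w y
  have Am[measurable]: "(\<lambda>(w,y). A w y) \<in> borel_measurable (lborel \<Otimes>\<^sub>M lborel)"
    unfolding A_def f0_def by measurable
  define B where "B w u = ennreal (1/(1+w)) * A w (u/(1+w))" for w u
  have Bm[measurable]: "(\<lambda>(w,u). B w u) \<in> borel_measurable (lborel \<Otimes>\<^sub>M lborel)"
    unfolding B_def A_def f0_def by measurable
  define C where "C u v = ennreal (1/(1+eps*u)) * B (v/(1+eps*u)) u" for u v
  have Cm[measurable]: "(\<lambda>(u,v). C u v) \<in> borel_measurable (lborel \<Otimes>\<^sub>M lborel)"
    unfolding C_def B_def A_def f0_def by measurable
  have "(\<integral>\<^sup>+z. \<phi> (fst z + snd z, fst z * (1 + eps * fst z + eps * snd z) / snd z) * (F (fst z) * G (snd z)) \<partial>(lborel \<Otimes>\<^sub>M lborel))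
      = (\<integral>\<^sup>+x. \<integral>\<^sup>+y. f0 x y \<partial>lborel \<partial>lborel)"
    by (subst lborel.nn_integral_fst[symmetric]) (auto simp: f0_def[abs_def])
  also have "\<dots> = (\<integral>\<^sup>+y. \<integral>\<^sup>+x. f0 x y \<partial>lborel \<partial>lborel)"
    by (rule lborel_pair.Fubini'[symmetric]) simp
  also have "\<dots> = (\<integral>\<^sup>+y. \<integral>\<^sup>+w. A w y \<partial>lborel \<partial>lborel)"
  proof (rule nn_integral_cong)
    fix y :: real
    show "(\<integral>\<^sup>+x. f0 x y \<partial>lborel) = (\<integral>\<^sup>+w. A w y \<partial>lborel)"
    proof (cases "y > 0")
      case True
      have "(\<integral>\<^sup>+x. f0 x y \<partial>lborel) = ennreal \<bar>y\<bar> * (\<integral>\<^sup>+w. f0 (0 + y * w) y \<partial>lborel)"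
        by (rule nn_integral_real_affine) (use True in auto)
      also have "\<dots> = (\<integral>\<^sup>+w. A w y \<partial>lborel)"
        using True by (subst nn_integral_cmult[symmetric]) (auto simp: A_def mult.commute)
      finally show ?thesis .
    next
      case False
      then show ?thesis by (simp add: A_def f0_def G0 ennreal_neg)
    qed
  qed
  also have "\<dots> = (\<integral>\<^sup>+w. \<integral>\<^sup>+y. A w y \<partial>lborel \<partial>lborel)"
    by (rule lborel_pair.Fubini') simp
  also have "\<dots> = (\<integral>\<^sup>+w. \<integral>\<^sup>+u. B w u \<partial>lborel \<partial>lborel)"
  proof (rule nn_integral_cong)
    fix w :: real
    show "(\<integral>\<^sup>+y. A w y \<partial>lborel) = (\<integral>\<^sup>+u. B w u \<partial>lborel)"
    proof (cases "w > -1")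
      case True
      have "(\<integral>\<^sup>+y. A w y \<partial>lborel) = ennreal \<bar>1/(1+w)\<bar> * (\<integral>\<^sup>+u. A w (0 + 1/(1+w) * u) \<partial>lborel)"
        by (rule nn_integral_real_affine) (use True in auto)
      also have "\<dots> = (\<integral>\<^sup>+u. B w u \<partial>lborel)"
        using True by (subst nn_integral_cmult[symmetric]) (auto simp: B_def[abs_def])
      finally show ?thesis .
    next
      case False
      have "A w y = 0" for y
      proof (cases "y > 0")
        case True
        then have "w * y \<le> 0" using False by (simp add: mult_nonpos_nonneg)
        then show ?thesis by (simp add: A_def f0_def F0)
      qed (simp add: A_def f0_def G0)
      moreover have "B w u = 0" for u
        using False by (simp add: B_def \<open>\<And>y. A w y = 0\<close>)
      ultimately show ?thesis by simp
    qed
  qed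
  also have "\<dots> = (\<integral>\<^sup>+u. \<integral>\<^sup>+w. B w u \<partial>lborel \<partial>lborel)"
    by (rule lborel_pair.Fubini'[symmetric]) simp
  also have "\<dots> = (\<integral>\<^sup>+u. \<integral>\<^sup>+v. C u v \<partial>lborel \<partial>lborel)"
  proof (rule nn_integral_cong)
    fix u :: real
    show "(\<integral>\<^sup>+w. B w u \<partial>lborel) = (\<integral>\<^sup>+v. C u v \<partial>lborel)"
    proof (cases "u > 0")
      case True
      have pos: "1 + eps * u > 0" using True eps by (simp add: add_pos_nonneg)
      have "(\<integral>\<^sup>+w. B w u \<partial>lborel) = ennreal \<bar>1/(1+eps*u)\<bar> * (\<integral>\<^sup>+v. B (0 + 1/(1+eps*u) * v) u \<partial>lborel)"
        by (rule nn_integral_real_affine) (use pos in auto)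
      also have "\<dots> = (\<integral>\<^sup>+v. C u v \<partial>lborel)"
        using pos by (subst nn_integral_cmult[symmetric]) (auto simp: C_def[abs_def])
      finally show ?thesis .
    next
      case False
      have "B w u = 0" for w
      proof (cases "w > -1")
        case True
        then have "u/(1+w) \<le> 0" using False by (simp add: divide_nonpos_pos)
        then show ?thesis by (simp add: B_def A_def f0_def G0)
      next
        case False
        then show ?thesis by (simp add: B_def ennreal_neg)
      qed
      then show ?thesis by (simp add: C_def)
    qed
  qed
  also have "\<dots> = (\<integral>\<^sup>+z. C (fst z) (snd z) \<partial>(lborel \<Otimes>\<^sub>M lborel))"
    by (subst lborel.nn_integral_fst[symmetric]) (auto simp: split_beta')
  also have "\<dots> = (\<integral>\<^sup>+z. \<phi> z * Dens eps F G (fst z) (snd z) \<partial>(lborel \<Otimes>\<^sub>M lborel))"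
  proof (rule nn_integral_cong)
    fix z :: "real \<times> real"
    obtain u v where z: "z = (u, v)" by (cases z)
    define w where "w = v/(1+eps*u)"
    define y where "y = u/(1+w)"
    have C_eq: "C u v = ennreal (1/(1+eps*u)) * ennreal (1/(1+w)) * ennreal y * \<phi> (w*y + y, w*y * (1 + eps * (w*y) + eps * y) / y) * (F (w*y) * G y)"
      by (simp add: C_def B_def A_def f0_def w_def y_def mult.assoc)
    have D_eq: "Dens eps F G u v = ennreal (1/(1+eps*u)) * ennreal (1/(1+w)) * ennreal y * F (w*y) * G y"
      by (simp add: Dens_def w_def y_def)
    show "C (fst z) (snd z) = \<phi> z * Dens eps F G (fst z) (snd z)"
    proof (cases "1 + eps*u > 0 \<and> 1 + w > 0 \<and> y > 0 \<and> w*y > 0")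
      case True
      have "w*y + y = (1+w)*y" by (simp add: algebra_simps)
      also have "\<dots> = u" using True by (simp add: y_def)
      finally have "w*y + y = u" .
      moreover have "w*y * (1 + eps * (w*y) + eps * y) / y = v"
        proof -
        have "w*y * (1 + eps * (w*y) + eps * y) / y = w * (1 + eps * (w*y + y))"
          using True by (simp add: field_simps)
        also have "\<dots> = w * (1 + eps*u)" using \<open>w*y + y = u\<close> by simp
        also have "\<dots> = v" using True by (simp add: w_def)
        finally show ?thesis .
      qed
      ultimately show ?thesis unfolding z fst_conv snd_conv C_eq D_eq by (simp add: ac_simps)
    next
      case False
      then have Z: "ennreal (1/(1+eps*u)) = 0 \<or> ennreal (1/(1+w)) = 0 \<or> ennreal y = 0 \<or> F (w*y) = 0 \<or> G y = 0"
        by (auto simp: F0 G0 not_less ennreal_eq_0_iff divide_le_0_1_iff)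
      then show ?thesis unfolding z fst_conv snd_conv C_eq D_eq by (elim disjE) simp_all
    qed
  qed
  finally show ?thesis .
qed


lemma F_KGa_A_measurable[measurable]: "F_KGa_A eps \<in> measurable (lborel \<Otimes>\<^sub>M lborel) (lborel \<Otimes>\<^sub>M lborel)"
  unfolding F_KGa_A_def by (simp add: split_beta')

lemma Dens_measurable[measurable]:
  assumes [measurable]: "F \<in> borel_measurable borel" "G \<in> borel_measurable borel"
  shows "(\<lambda>z. Dens eps F G (fst z) (snd z)) \<in> borel_measurable (lborel \<Otimes>\<^sub>M lborel)"
  unfolding Dens_def by measurable

lemma distr_transform:
  fixes F G :: "real \<Rightarrow> ennreal"
  assumes Fm[measurable]: "F \<in> borel_measurable borel" and Gm[measurable]: "G \<in> borel_measurable borel"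
    and F0: "\<And>x. x \<le> 0 \<Longrightarrow> F x = 0" and G0: "\<And>y. y \<le> 0 \<Longrightarrow> G y = 0" and eps: "eps \<ge> 0"
  shows "distr (density (lborel \<Otimes>\<^sub>M lborel) (\<lambda>(x,y). F x * G y)) (lborel \<Otimes>\<^sub>M lborel) (F_KGa_A eps)
       = density (lborel \<Otimes>\<^sub>M lborel) (\<lambda>z. Dens eps F G (fst z) (snd z))"
proof (rule measure_eqI)
  fix A assume "A \<in> sets (distr (density (lborel \<Otimes>\<^sub>M lborel) (\<lambda>(x,y). F x * G y)) (lborel \<Otimes>\<^sub>M lborel) (F_KGa_A eps))"
  then have A[measurable]: "A \<in> sets (lborel \<Otimes>\<^sub>M lborel)" by simp
  have pre: "F_KGa_A eps -` A \<in> sets (borel \<Otimes>\<^sub>M borel)"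
    using measurable_sets[OF F_KGa_A_measurable A] by (simp add: space_pair_measure)
  have "emeasure (distr (density (lborel \<Otimes>\<^sub>M lborel) (\<lambda>(x,y). F x * G y)) (lborel \<Otimes>\<^sub>M lborel) (F_KGa_A eps)) A
      = emeasure (density (lborel \<Otimes>\<^sub>M lborel) (\<lambda>(x,y). F x * G y)) (F_KGa_A eps -` A \<inter> space (lborel \<Otimes>\<^sub>M lborel))"
    using A by (subst emeasure_distr) simp_all
  also have "\<dots> = (\<integral>\<^sup>+z. indicator A (fst z + snd z, fst z * (1 + eps * fst z + eps * snd z) / snd z) * (F (fst z) * G (snd z)) \<partial>(lborel \<Otimes>\<^sub>M lborel))"
    using pre by (subst emeasure_density) (auto intro!: nn_integral_cong simp: F_KGa_A_def split_beta' indicator_def space_pair_measure)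
  also have "\<dots> = (\<integral>\<^sup>+z. indicator A z * Dens eps F G (fst z) (snd z) \<partial>(lborel \<Otimes>\<^sub>M lborel))"
    by (rule core) (auto simp: F0 G0 eps)
  also have "\<dots> = emeasure (density (lborel \<Otimes>\<^sub>M lborel) (\<lambda>z. Dens eps F G (fst z) (snd z))) A"
    using A by (subst emeasure_density) (auto intro!: nn_integral_cong simp: mult.commute)
  finally show "emeasure (distr (density (lborel \<Otimes>\<^sub>M lborel) (\<lambda>(x,y). F x * G y)) (lborel \<Otimes>\<^sub>M lborel) (F_KGa_A eps)) A
      = emeasure (density (lborel \<Otimes>\<^sub>M lborel) (\<lambda>z. Dens eps F G (fst z) (snd z))) A" .
qed simp



lemma ptA:
  fixes e c b lam u v ZX ZY :: real
  assumes e: "e > 0" and c: "c > 0" and b: "b > 0" and lam: "lam < 0" and lb: "- b < lam / 2"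
    and u: "u > 0" and v: "v > 0" and ZX: "ZX > 0" and ZY: "ZY > 0"
  shows "(1/(1+e * u)) * (1/(1+v/(1+e * u))) * (u/(1+v/(1+e * u)))
      * (K_kernel lam c b 1 (1/e) ((v/(1+e * u)) * (u/(1+v/(1+e * u)))) / ZX) * (Ga_kernel (-lam) c (u/(1+v/(1+e * u))) / ZY)
    = (e powr (-lam) / (ZX * ZY)) * K_kernel (-lam) c b 1 (1/e) u * BetaPrime_kernel (b+lam/2) (-lam) v"
proof -
  define S where "S = 1 + e * u"
  have S: "S > 0" using e u by (simp add: S_def add_pos_pos)
  have sv: "S + v > 0" using S v by simp
  have w1: "1/(1+v/S) = S/(S+v)" using S sv by (simp add: field_simps)
  have y: "u/(1+v/S) = u * S/(S+v)" using S sv by (simp add: field_simps)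
  have x: "(v/S) * (u/(1+v/S)) = u * v/(S+v)" using S sv by (simp add: field_simps)
  have bx: "1 + 1/e/(u * v/(S+v)) = S * (1+v)/(e * u * v)"
    using S sv e u v by (simp add: field_simps S_def)
  have bu: "1 + 1/e/u = S/(e * u)" using e u by (simp add: field_simps S_def)
  have xy: "u * v/(S+v) + u * S/(S+v) = u"
  proof -
    have "u * v/(S+v) + u * S/(S+v) = u * (S+v)/(S+v)" by (simp add: add_divide_distrib[symmetric] algebra_simps)
    then show ?thesis using sv by simp
  qed
  have cxy: "c * (u * S) / (S + v) = c * u - c * (u * v) / (S + v)"
  proof -
    have "c * (u * S) / (S + v) + c * (u * v) / (S + v) = c * (u * v/(S+v) + u * S/(S+v))"
      by (simp add: algebra_simps add_divide_distrib)
    then show ?thesis using xy by simp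
  qed
  have xpos: "u * v/(S+v) > 0" "u * S/(S+v) > 0" using u v S sv by auto
  have L: "(1/S) * (S/(S+v)) * (u * S/(S+v))
      * ((u * v/(S+v)) powr (lam-1) * exp (-c * 1 * (u * v/(S+v))) * (S * (1+v)/(e * u * v)) powr (-b+lam/2) / ZX)
      * ((u * S/(S+v)) powr (-lam-1) * exp (-c * (u * S/(S+v))) / ZY)
    = (e powr (-lam) / (ZX * ZY)) * (u powr (-lam-1) * exp (-c * 1 * u) * (S/(e * u)) powr (-b + -lam/2))
      * (v powr (b+lam/2-1) * (1+v) powr (-(b+lam/2) - -lam))" (is "?L = ?R")
  proof -
    have "?L > 0" using u v S sv e ZX ZY by (simp add: divide_pos_pos)
    moreover have "?R > 0" using u v S sv e ZX ZY by (simp add: divide_pos_pos)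
    moreover have "ln ?L = ln ?R"
      using u v S sv e ZX ZY xy
      apply (simp add: ln_mult ln_div ln_powr divide_pos_pos cxy)
      apply (simp add: algebra_simps)
      apply (simp add: field_simps)
      done
    ultimately show ?thesis by simp
  qed
  have x': "v/S * (u * S/(S+v)) = u * v/(S+v)" using S sv by (simp add: field_simps)
  have kx: "K_kernel lam c b 1 (1/e) (u * v/(S+v)) = (u * v/(S+v)) powr (lam-1) * exp (-c * 1 * (u * v/(S+v))) * (S * (1+v)/(e * u * v)) powr (-b+lam/2)"
    unfolding K_kernel_def using xpos(1) by (simp only: if_True bx)
  have ky: "Ga_kernel (-lam) c (u * S/(S+v)) = (u * S/(S+v)) powr (-lam-1) * exp (-c * (u * S/(S+v)))"
    unfolding Ga_kernel_def using xpos(2) by simp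
  have ku: "K_kernel (-lam) c b 1 (1/e) u = u powr (-lam-1) * exp (-c * 1 * u) * (S/(e * u)) powr (-b + -lam/2)"
    unfolding K_kernel_def using u by (simp only: if_True bu)
  have kv: "BetaPrime_kernel (b+lam/2) (-lam) v = v powr (b+lam/2-1) * (1+v) powr (-(b+lam/2) - -lam)"
    unfolding BetaPrime_kernel_def using v by simp
  show ?thesis
    unfolding S_def[symmetric] y w1 x' unfolding kx ky ku kv L[symmetric] by (simp only: mult.assoc)
qed


lemma ptB:
  fixes a b lam u v ZX ZY :: real
  assumes a: "a > 0" and b: "b > 0" and lam: "lam < 0" and lb: "- b < lam / 2"
    and u: "u > 0" and v: "v > 0" and ZX: "ZX > 0" and ZY: "ZY > 0"
  shows "(1/(1+0 * u)) * (1/(1+v/(1+0 * u))) * (u/(1+v/(1+0 * u)))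
      * (Ga_kernel (b+lam/2) a ((v/(1+0 * u)) * (u/(1+v/(1+0 * u)))) / ZX) * (Ga_kernel (-lam) a (u/(1+v/(1+0 * u))) / ZY)
    = (1 / (ZX * ZY)) * Ga_kernel (b-lam/2) a u * BetaPrime_kernel (b+lam/2) (-lam) v"
proof -
  have sv: "1 + v > 0" using v by simp
  have w1: "1/(1+v) = 1/(1+v)" ..
  have x': "v * (u/(1+v)) = u * v/(1+v)" by simp
  have xy: "u * v/(1+v) + u/(1+v) = u"
  proof -
    have "u * v/(1+v) + u/(1+v) = u * (1+v)/(1+v)" by (simp add: add_divide_distrib[symmetric] algebra_simps)
    then show ?thesis using sv by simp
  qed
  have cxy: "a * u / (1 + v) = a * u - a * (u * v) / (1 + v)"
  proof -
    have "a * u / (1 + v) + a * (u * v) / (1 + v) = a * (u * v/(1+v) + u/(1+v))"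
      by (simp add: algebra_simps add_divide_distrib)
    then show ?thesis using xy by simp
  qed
  have xpos: "u * v/(1+v) > 0" "u/(1+v) > 0" using u v sv by auto
  have L: "(1/(1+v)) * (u/(1+v))
      * ((u * v/(1+v)) powr (b+lam/2-1) * exp (-a * (u * v/(1+v))) / ZX)
      * ((u/(1+v)) powr (-lam-1) * exp (-a * (u/(1+v))) / ZY)
    = (1 / (ZX * ZY)) * (u powr (b-lam/2-1) * exp (-a * u))
      * (v powr (b+lam/2-1) * (1+v) powr (-(b+lam/2) - -lam))" (is "?L = ?R")
  proof -
    have "?L > 0" using u v sv ZX ZY by (simp add: divide_pos_pos)
    moreover have "?R > 0" using u v sv ZX ZY by (simp add: divide_pos_pos)
    moreover have "ln ?L = ln ?R"
      using u v sv ZX ZY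
      apply (simp add: ln_mult ln_div ln_powr divide_pos_pos cxy)
      apply (simp add: algebra_simps)
      done
    ultimately show ?thesis by simp
  qed
  have kx: "Ga_kernel (b+lam/2) a (u * v/(1+v)) = (u * v/(1+v)) powr (b+lam/2-1) * exp (-a * (u * v/(1+v)))"
    unfolding Ga_kernel_def using xpos(1) by simp
  have ky: "Ga_kernel (-lam) a (u/(1+v)) = (u/(1+v)) powr (-lam-1) * exp (-a * (u/(1+v)))"
    unfolding Ga_kernel_def using xpos(2) by simp
  have ku: "Ga_kernel (b-lam/2) a u = u powr (b-lam/2-1) * exp (-a * u)"
    unfolding Ga_kernel_def using u by simp
  have kv: "BetaPrime_kernel (b+lam/2) (-lam) v = v powr (b+lam/2-1) * (1+v) powr (-(b+lam/2) - -lam)"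
    unfolding BetaPrime_kernel_def using v by simp
  show ?thesis
    apply (simp only: mult_zero_left add_0_right div_by_1 x')
    unfolding kx ky ku kv L[symmetric] by simp
qed

lemma (in prob_space) indep_var_lborel_iff:
  "indep_var lborel X lborel Y \<longleftrightarrow> indep_var borel X borel Y"
proof -
  have s: "sets (case_bool lborel lborel i) = sets (case_bool borel borel i)" for i :: bool
    by (cases i) auto
  have m: "measurable M (case_bool lborel lborel i) = measurable M (case_bool borel borel i)" for i :: bool
    by (rule measurable_cong_sets) (auto simp: s)
  show ?thesis unfolding indep_var_def indep_vars_def2 s m ..
qed



lemma nn_integral_pos_of_pos:
  fixes h :: "real \<Rightarrow> real"
  assumes [measurable]: "h \<in> borel_measurable borel" and pos: "\<And>u. u > 0 \<Longrightarrow> h u > 0"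
  shows "(\<integral>\<^sup>+u. ennreal (h u) \<partial>lborel) > 0"
proof (rule ccontr)
  assume "\<not> ?thesis"
  then have "(\<integral>\<^sup>+u. ennreal (h u) \<partial>lborel) = 0" by simp
  then have "AE u in lborel. ennreal (h u) = 0" by (subst (asm) nn_integral_0_iff_AE) auto
  then have "AE u in lborel. (u::real) \<le> 0"
    by (rule eventually_mono) (metis pos ennreal_eq_0_iff not_le)
  then have "emeasure lborel {u::real. \<not> u \<le> 0} = 0"
    by (subst (asm) AE_iff_measurable[where N="{u::real. \<not> u \<le> 0}"]) auto
  moreover have "emeasure lborel {1..2::real} \<le> emeasure lborel {u::real. \<not> u \<le> 0}"
    by (rule emeasure_mono) auto
  ultimately show False by simp
qed

lemma normalize_joint:
  fixes U V :: "'a \<Rightarrow> real" and h k :: "real \<Rightarrow> real" and C :: real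
  assumes M: "prob_space M" and U[measurable]: "U \<in> borel_measurable M" and V[measurable]: "V \<in> borel_measurable M"
    and hm[measurable]: "h \<in> borel_measurable borel" and km[measurable]: "k \<in> borel_measurable borel"
    and h0: "\<And>u. h u \<ge> 0" and k0: "\<And>v. k v \<ge> 0"
    and hp: "\<And>u. u > 0 \<Longrightarrow> h u > 0" and kp: "\<And>v. v > 0 \<Longrightarrow> k v > 0"
    and J: "distr M (lborel \<Otimes>\<^sub>M lborel) (\<lambda>\<omega>. (U \<omega>, V \<omega>)) = density (lborel \<Otimes>\<^sub>M lborel) (\<lambda>z. ennreal (C * h (fst z) * k (snd z)))"
  shows "prob_space.indep_var M borel U borel V \<and> distributed M lborel U (normalized_density h) \<and> distributed M lborel V (normalized_density k)"
proof -
  interpret prob_space M by fact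
  interpret lborel_pair: pair_sigma_finite lborel lborel ..
  define Ih where "Ih = (\<integral>\<^sup>+u. ennreal (h u) \<partial>lborel)"
  define Ik where "Ik = (\<integral>\<^sup>+u. ennreal (k u) \<partial>lborel)"
  have Ih0: "Ih > 0" unfolding Ih_def by (rule nn_integral_pos_of_pos) (auto simp: hp)
  have Ik0: "Ik > 0" unfolding Ik_def by (rule nn_integral_pos_of_pos) (auto simp: kp)
  have UNIVs: "UNIV \<in> sets (borel \<Otimes>\<^sub>M borel :: (real \<times> real) measure)"
    by (metis sets.top space_pair_measure space_borel UNIV_Times_UNIV)
  have sp: "space (lborel \<Otimes>\<^sub>M lborel :: (real \<times> real) measure) = UNIV" by (simp add: space_pair_measure)
  have sps: "space (lborel \<Otimes>\<^sub>M lborel :: (real \<times> real) measure) \<in> sets (borel \<Otimes>\<^sub>M borel)"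
  proof -
    have "sets (lborel \<Otimes>\<^sub>M lborel :: (real \<times> real) measure) = sets (borel \<Otimes>\<^sub>M borel)"
      by (intro sets_pair_measure_cong) auto
    then show ?thesis by (metis sets.top)
  qed
  have tot: "(\<integral>\<^sup>+z. ennreal (C * h (fst z) * k (snd z)) \<partial>(lborel \<Otimes>\<^sub>M lborel)) = 1"
  proof -
    have "1 = emeasure (distr M (lborel \<Otimes>\<^sub>M lborel) (\<lambda>\<omega>. (U \<omega>, V \<omega>))) (space (lborel \<Otimes>\<^sub>M lborel))"
      proof -
      have "prob_space (distr M (lborel \<Otimes>\<^sub>M lborel) (\<lambda>\<omega>. (U \<omega>, V \<omega>)))"
        by (rule prob_space_distr) simp
      from prob_space.emeasure_space_1[OF this] show ?thesis by simp
    qed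
    also have "\<dots> = (\<integral>\<^sup>+z. ennreal (C * h (fst z) * k (snd z)) \<partial>(lborel \<Otimes>\<^sub>M lborel))"
      unfolding J using sps by (subst emeasure_density) (auto intro!: nn_integral_cong)
    finally show ?thesis ..
  qed
  have C0: "C > 0"
  proof (rule ccontr)
    assume "\<not> C > 0"
    then have "\<And>z. ennreal (C * h (fst z) * k (snd z)) = 0"
      using h0 k0 by (auto simp: ennreal_eq_0_iff mult_nonpos_nonneg)
    then show False using tot by simp
  qed
  have prodI: "ennreal C * Ih * Ik = 1"
  proof -
    have "(\<integral>\<^sup>+z. ennreal (C * h (fst z) * k (snd z)) \<partial>(lborel \<Otimes>\<^sub>M lborel))
        = (\<integral>\<^sup>+u. \<integral>\<^sup>+v. ennreal C * ennreal (h u) * ennreal (k v) \<partial>lborel \<partial>lborel)"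
      using C0 h0 k0 by (subst lborel.nn_integral_fst[symmetric]) (auto simp: ennreal_mult intro!: nn_integral_cong)
    also have "\<dots> = (\<integral>\<^sup>+u. ennreal C * ennreal (h u) * Ik \<partial>lborel)"
      unfolding Ik_def by (subst nn_integral_cmult) auto
    also have "\<dots> = ennreal C * Ih * Ik"
      unfolding Ih_def by (subst nn_integral_multc) (auto simp: nn_integral_cmult)
    finally show ?thesis using tot by simp
  qed
  have Ihf: "Ih \<noteq> \<infinity>"
  proof
    assume "Ih = \<infinity>"
    then have "ennreal C * Ih * Ik = \<infinity>" using C0 Ik0 by (simp add: ennreal_mult_eq_top_iff)
    then show False using prodI by simp
  qed
  have Ikf: "Ik \<noteq> \<infinity>"
  proof
    assume "Ik = \<infinity>"
    then have "ennreal C * Ih * Ik = \<infinity>" using C0 Ih0 by (simp add: ennreal_mult_eq_top_iff)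
    then show False using prodI by simp
  qed
  obtain Zh where Zh: "Ih = ennreal Zh" "Zh \<ge> 0" using Ihf by (cases Ih) auto
  obtain Zk where Zk: "Ik = ennreal Zk" "Zk \<ge> 0" using Ikf by (cases Ik) auto
  have Zh0: "Zh > 0" using Ih0 Zh by auto
  have Zk0: "Zk > 0" using Ik0 Zk by auto
  have inth: "integrable lborel h"
    by (rule integrableI_nn_integral_finite[where x=Zh]) (use h0 Zh in \<open>auto simp: Ih_def\<close>)
  have intk: "integrable lborel k"
    by (rule integrableI_nn_integral_finite[where x=Zk]) (use k0 Zk in \<open>auto simp: Ik_def\<close>)
  have LZh: "(LINT t|lborel. h t) = Zh"
  proof -
    have "ennreal (LINT t|lborel. h t) = Ih" unfolding Ih_def
      by (rule nn_integral_eq_integral[symmetric]) (use inth h0 in auto)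
    then show ?thesis using Zh h0 by (simp add: integral_nonneg)
  qed
  have LZk: "(LINT t|lborel. k t) = Zk"
  proof -
    have "ennreal (LINT t|lborel. k t) = Ik" unfolding Ik_def
      by (rule nn_integral_eq_integral[symmetric]) (use intk k0 in auto)
    then show ?thesis using Zk k0 by (simp add: integral_nonneg)
  qed
  have CZ: "C * Zh * Zk = 1"
    using prodI C0 Zh Zk by (simp add: ennreal_mult[symmetric])
  have pt: "ennreal (C * h u * k v) = normalized_density h u * normalized_density k v" for u v
  proof -
    have "C = 1 / (Zh * Zk)" using CZ Zh0 Zk0 by (simp add: field_simps)
    then have "C * h u * k v = (h u / Zh) * (k v / Zk)" by simp
    moreover have "ennreal ((h u / Zh) * (k v / Zk)) = ennreal (h u / Zh) * ennreal (k v / Zk)"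
      using h0[of u] k0[of v] Zh0 Zk0 by (intro ennreal_mult) auto
    ultimately show ?thesis unfolding normalized_density_def LZh LZk by simp
  qed
  have nh: "(\<integral>\<^sup>+u. normalized_density h u \<partial>lborel) = 1"
  proof -
    have "(\<integral>\<^sup>+u. normalized_density h u \<partial>lborel) = (\<integral>\<^sup>+u. ennreal (1/Zh) * ennreal (h u) \<partial>lborel)"
      unfolding normalized_density_def LZh using Zh0 h0
      by (intro nn_integral_cong) (simp add: ennreal_mult[symmetric])
    also have "\<dots> = ennreal (1/Zh) * Ih" unfolding Ih_def by (simp add: nn_integral_cmult)
    also have "\<dots> = 1" using Zh Zh0 by (simp add: ennreal_mult[symmetric])
    finally show ?thesis .
  qed
  have nk: "(\<integral>\<^sup>+u. normalized_density k u \<partial>lborel) = 1"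
  proof -
    have "(\<integral>\<^sup>+u. normalized_density k u \<partial>lborel) = (\<integral>\<^sup>+u. ennreal (1/Zk) * ennreal (k u) \<partial>lborel)"
      unfolding normalized_density_def LZk using Zk0 k0
      by (intro nn_integral_cong) (simp add: ennreal_mult[symmetric])
    also have "\<dots> = ennreal (1/Zk) * Ik" unfolding Ik_def by (simp add: nn_integral_cmult)
    also have "\<dots> = 1" using Zk Zk0 by (simp add: ennreal_mult[symmetric])
    finally show ?thesis .
  qed
  have ndm[measurable]: "normalized_density h \<in> borel_measurable borel" "normalized_density k \<in> borel_measurable borel"
    unfolding normalized_density_def by measurable
  show ?thesis
  proof (rule joint_density_indep[OF M U V _ _ nh nk])
    show "normalized_density h \<in> borel_measurable lborel" unfolding normalized_density_def by measurable
    show "normalized_density k \<in> borel_measurable lborel" unfolding normalized_density_def by measurable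
    show "distr M (lborel \<Otimes>\<^sub>M lborel) (\<lambda>\<omega>. (U \<omega>, V \<omega>)) = density (lborel \<Otimes>\<^sub>M lborel) (\<lambda>(u, v). normalized_density h u * normalized_density k v)"
      unfolding J
      apply (rule density_cong)
        apply measurable
      apply (auto simp: pt split_beta')
      done
  qed
qed




lemma gen_transform:
  fixes X Y :: "'a \<Rightarrow> real" and fX fY :: "real \<Rightarrow> ennreal"
  assumes M: "prob_space M" and eps: "eps \<ge> 0"
    and dX: "distributed M lborel X fX" and dY: "distributed M lborel Y fY"
    and ind: "prob_space.indep_var M borel X borel Y"
    and fX0: "\<And>x. x \<le> 0 \<Longrightarrow> fX x = 0" and fY0: "\<And>y. y \<le> 0 \<Longrightarrow> fY y = 0"
  shows "distr M (lborel \<Otimes>\<^sub>M lborel) (\<lambda>\<omega>. F_KGa_A eps (X \<omega>, Y \<omega>))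
       = density (lborel \<Otimes>\<^sub>M lborel) (\<lambda>z. Dens eps fX fY (fst z) (snd z))"
proof -
  interpret prob_space M by fact
  have fXm[measurable]: "fX \<in> borel_measurable borel" using distributed_borel_measurable[OF dX] by simp
  have fYm[measurable]: "fY \<in> borel_measurable borel" using distributed_borel_measurable[OF dY] by simp
  have Xm[measurable]: "X \<in> borel_measurable M" using distributed_measurable[OF dX] by simp
  have Ym[measurable]: "Y \<in> borel_measurable M" using distributed_measurable[OF dY] by simp
  have j: "distributed M (lborel \<Otimes>\<^sub>M lborel) (\<lambda>\<omega>. (X \<omega>, Y \<omega>)) (\<lambda>(x,y). fX x * fY y)"
    by (rule distributed_joint_indep[OF _ _ dX dY]) (auto simp: indep_var_lborel_iff ind intro: lborel.sigma_finite_measure_axioms)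
  have "distr M (lborel \<Otimes>\<^sub>M lborel) (\<lambda>\<omega>. F_KGa_A eps (X \<omega>, Y \<omega>))
      = distr (distr M (lborel \<Otimes>\<^sub>M lborel) (\<lambda>\<omega>. (X \<omega>, Y \<omega>))) (lborel \<Otimes>\<^sub>M lborel) (F_KGa_A eps)"
    by (subst distr_distr) (auto simp: comp_def)
  also have "\<dots> = distr (density (lborel \<Otimes>\<^sub>M lborel) (\<lambda>(x,y). fX x * fY y)) (lborel \<Otimes>\<^sub>M lborel) (F_KGa_A eps)"
    using distributed_distr_eq_density[OF j] by simp
  also have "\<dots> = density (lborel \<Otimes>\<^sub>M lborel) (\<lambda>z. Dens eps fX fY (fst z) (snd z))"
    by (rule distr_transform) (auto simp: fX0 fY0 eps)
  finally show ?thesis .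
qed

lemma Z_pos:
  fixes X :: "'a \<Rightarrow> real"
  assumes M: "prob_space M" and dX: "distributed M lborel X (normalized_density g)" and g0: "\<And>x. g x \<ge> 0"
  shows "(LINT t|lborel. g t) > 0"
proof (rule ccontr)
  assume "\<not> ?thesis"
  moreover have "(LINT t|lborel. g t) \<ge> 0" using g0 by (simp add: integral_nonneg)
  ultimately have Z: "(LINT t|lborel. g t) = 0" by simp
  have "normalized_density g = (\<lambda>x. 0)" by (rule ext) (simp add: normalized_density_def Z)
  then have "distr M lborel X = density lborel (\<lambda>x. 0)" using distributed_distr_eq_density[OF dX] by simp
  moreover have "prob_space (distr M lborel X)"
    by (rule prob_space.prob_space_distr[OF M]) (use distributed_measurable[OF dX] in simp)
  ultimately have "prob_space (density lborel (\<lambda>x::real. 0))" by simp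
  from prob_space.emeasure_space_1[OF this] show False by (simp add: emeasure_density)
qed

lemma Dens_zero:
  assumes eps: "eps \<ge> 0" and F0: "\<And>x. x \<le> 0 \<Longrightarrow> F x = 0" and G0: "\<And>y. y \<le> 0 \<Longrightarrow> G y = 0"
    and nuv: "\<not> (u > 0 \<and> v > 0)"
  shows "Dens eps F G u v = 0"
proof -
  define S where "S = 1 + eps * u"
  define w where "w = v / S"
  define y where "y = u / (1 + w)"
  have D: "Dens eps F G u v = ennreal (1/S) * ennreal (1/(1+w)) * ennreal y * F (w * y) * G y"
    by (simp add: Dens_def S_def w_def y_def)
  show ?thesis
  proof (cases "S > 0 \<and> 1 + w > 0 \<and> y > 0")
    case True
    then have "u > 0" using True by (auto simp: y_def zero_less_divide_iff)
    then have "v \<le> 0" using nuv by simp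
    then have "w \<le> 0" using True by (simp add: w_def divide_nonpos_pos)
    then have "w * y \<le> 0" using True by (simp add: mult_nonpos_nonneg)
    then show ?thesis unfolding D by (simp add: F0)
  next
    case False
    then show ?thesis unfolding D by (auto simp: G0 not_less ennreal_eq_0_iff divide_le_0_1_iff)
  qed
qed

lemma Dens_pos:
  assumes eps: "eps \<ge> 0" and u: "u > 0" and v: "v > 0"
    and F: "\<And>x. F x = ennreal (f x)" and G: "\<And>y. G y = ennreal (g y)" and f0: "\<And>x. f x \<ge> 0" and g0: "\<And>y. g y \<ge> 0"
  shows "Dens eps F G u v = ennreal ((1/(1+eps * u)) * (1/(1+v/(1+eps * u))) * (u/(1+v/(1+eps * u)))
      * f ((v/(1+eps * u)) * (u/(1+v/(1+eps * u)))) * g (u/(1+v/(1+eps * u))))"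
proof -
  have S: "1 + eps * u > 0" using eps u by (simp add: add_pos_nonneg)
  then have w: "1 + v/(1+eps * u) > 0" using v by (simp add: add_pos_nonneg)
  show ?thesis unfolding Dens_def F G using S w u f0 g0
    by (simp add: ennreal_mult[symmetric] mult_nonneg_nonneg)
qed




lemma final_generic:
  fixes X Y :: "'a \<Rightarrow> real" and gX gY h k :: "real \<Rightarrow> real" and \<kappa> :: real
  assumes M: "prob_space M" and eps: "eps \<ge> 0"
    and dX: "distributed M lborel X (normalized_density gX)" and dY: "distributed M lborel Y (normalized_density gY)"
    and ind: "prob_space.indep_var M borel X borel Y"
    and gXm[measurable]: "gX \<in> borel_measurable borel" and gYm[measurable]: "gY \<in> borel_measurable borel"
    and hm[measurable]: "h \<in> borel_measurable borel" and km[measurable]: "k \<in> borel_measurable borel"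
    and gX0: "\<And>x. gX x \<ge> 0" and gY0: "\<And>x. gY x \<ge> 0" and h0: "\<And>x. h x \<ge> 0" and k0: "\<And>x. k x \<ge> 0"
    and gXz: "\<And>x. x \<le> 0 \<Longrightarrow> gX x = 0" and gYz: "\<And>x. x \<le> 0 \<Longrightarrow> gY x = 0"
    and hz: "\<And>x. x \<le> 0 \<Longrightarrow> h x = 0" and kz: "\<And>x. x \<le> 0 \<Longrightarrow> k x = 0"
    and hp: "\<And>x. x > 0 \<Longrightarrow> h x > 0" and kp: "\<And>x. x > 0 \<Longrightarrow> k x > 0"
    and pt: "\<And>u v ZX ZY. u > 0 \<Longrightarrow> v > 0 \<Longrightarrow> ZX > 0 \<Longrightarrow> ZY > 0 \<Longrightarrow>
       (1/(1+eps * u)) * (1/(1+v/(1+eps * u))) * (u/(1+v/(1+eps * u)))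
        * (gX ((v/(1+eps * u)) * (u/(1+v/(1+eps * u)))) / ZX) * (gY (u/(1+v/(1+eps * u))) / ZY)
       = (\<kappa> / (ZX * ZY)) * h u * k v"
  shows "let U = (\<lambda>\<omega>. fst (F_KGa_A eps (X \<omega>, Y \<omega>)));
             V = (\<lambda>\<omega>. snd (F_KGa_A eps (X \<omega>, Y \<omega>)))
         in prob_space.indep_var M borel U borel V \<and>
            distributed M lborel U (normalized_density h) \<and>
            distributed M lborel V (normalized_density k)"
proof -
  interpret prob_space M by fact
  define ZX where "ZX = (LINT t|lborel. gX t)"
  define ZY where "ZY = (LINT t|lborel. gY t)"
  have ZX: "ZX > 0" unfolding ZX_def by (rule Z_pos[OF M dX gX0])
  have ZY: "ZY > 0" unfolding ZY_def by (rule Z_pos[OF M dY gY0])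
  have Xm[measurable]: "X \<in> borel_measurable M" using distributed_measurable[OF dX] by simp
  have Ym[measurable]: "Y \<in> borel_measurable M" using distributed_measurable[OF dY] by simp
  have nX: "normalized_density gX x = ennreal (gX x / ZX)" for x by (simp add: normalized_density_def ZX_def)
  have nY: "normalized_density gY x = ennreal (gY x / ZY)" for x by (simp add: normalized_density_def ZY_def)
  have D: "Dens eps (normalized_density gX) (normalized_density gY) u v = ennreal (\<kappa> / (ZX * ZY) * h u * k v)" for u v
  proof (cases "u > 0 \<and> v > 0")
    case True
    have "Dens eps (normalized_density gX) (normalized_density gY) u v = ennreal ((1/(1+eps * u)) * (1/(1+v/(1+eps * u))) * (u/(1+v/(1+eps * u)))
        * (gX ((v/(1+eps * u)) * (u/(1+v/(1+eps * u)))) / ZX) * (gY (u/(1+v/(1+eps * u))) / ZY))"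
      by (rule Dens_pos[OF eps _ _ nX nY]) (use True ZX ZY gX0 gY0 in auto)
    then show ?thesis by (simp only: pt[OF conjunct1[OF True] conjunct2[OF True] ZX ZY])
  next
    case False
    then have "h u * k v = 0" using hz kz by (auto simp: not_less)
    moreover have "Dens eps (normalized_density gX) (normalized_density gY) u v = 0"
      by (rule Dens_zero[OF eps _ _ False]) (auto simp: nX nY gXz gYz)
    ultimately show ?thesis by (auto simp: mult.assoc)
  qed
  have J: "distr M (lborel \<Otimes>\<^sub>M lborel) (\<lambda>\<omega>. F_KGa_A eps (X \<omega>, Y \<omega>))
       = density (lborel \<Otimes>\<^sub>M lborel) (\<lambda>z. ennreal (\<kappa> / (ZX * ZY) * h (fst z) * k (snd z)))"
    by (subst gen_transform[OF M eps dX dY ind]) (auto simp: nX nY gXz gYz D)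
  have T: "(\<lambda>\<omega>. (fst (F_KGa_A eps (X \<omega>, Y \<omega>)), snd (F_KGa_A eps (X \<omega>, Y \<omega>)))) = (\<lambda>\<omega>. F_KGa_A eps (X \<omega>, Y \<omega>))"
    by simp
  have Tm: "(\<lambda>\<omega>. F_KGa_A eps (X \<omega>, Y \<omega>)) \<in> measurable M (lborel \<Otimes>\<^sub>M lborel)"
    by (rule measurable_compose[OF _ F_KGa_A_measurable]) simp
  have Um: "(\<lambda>\<omega>. fst (F_KGa_A eps (X \<omega>, Y \<omega>))) \<in> borel_measurable M"
    using measurable_compose[OF Tm measurable_fst] by (simp add: comp_def)
  have Vm: "(\<lambda>\<omega>. snd (F_KGa_A eps (X \<omega>, Y \<omega>))) \<in> borel_measurable M"
    using measurable_compose[OF Tm measurable_snd] by (simp add: comp_def)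
  have J': "distr M (lborel \<Otimes>\<^sub>M lborel) (\<lambda>\<omega>. (fst (F_KGa_A eps (X \<omega>, Y \<omega>)), snd (F_KGa_A eps (X \<omega>, Y \<omega>))))
       = density (lborel \<Otimes>\<^sub>M lborel) (\<lambda>z. ennreal (\<kappa> / (ZX * ZY) * h (fst z) * k (snd z)))"
    using J by (simp only: T)
  show ?thesis unfolding Let_def
    by (rule normalize_joint[OF M Um Vm hm km h0 k0 _ _ J']) (auto intro: hp kp)
qed




lemma K_kernel_measurable[measurable]: "K_kernel lam a b p q \<in> borel_measurable borel"
  unfolding K_kernel_def by measurable
lemma Ga_kernel_measurable[measurable]: "Ga_kernel A C \<in> borel_measurable borel"
  unfolding Ga_kernel_def by measurable
lemma BetaPrime_kernel_measurable[measurable]: "BetaPrime_kernel A B \<in> borel_measurable borel"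
  unfolding BetaPrime_kernel_def by measurable

lemma K_kernel_nonneg: "K_kernel lam a b p q x \<ge> 0"
  unfolding K_kernel_def by auto
lemma Ga_kernel_nonneg: "Ga_kernel A C x \<ge> 0"
  unfolding Ga_kernel_def by auto
lemma BetaPrime_kernel_nonneg: "BetaPrime_kernel A B x \<ge> 0"
  unfolding BetaPrime_kernel_def by auto

lemma K_kernel_zero: "x \<le> 0 \<Longrightarrow> K_kernel lam a b p q x = 0"
  unfolding K_kernel_def by auto
lemma Ga_kernel_zero: "x \<le> 0 \<Longrightarrow> Ga_kernel A C x = 0"
  unfolding Ga_kernel_def by auto
lemma BetaPrime_kernel_zero: "x \<le> 0 \<Longrightarrow> BetaPrime_kernel A B x = 0"
  unfolding BetaPrime_kernel_def by auto

lemma K_kernel_pos: assumes "q \<ge> 0" "x > 0" shows "K_kernel lam a b p q x > 0"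
proof -
  have "1 + q / x > 0" using assms by (simp add: add_pos_nonneg)
  then show ?thesis unfolding K_kernel_def using assms by simp
qed
lemma Ga_kernel_pos: "x > 0 \<Longrightarrow> Ga_kernel A C x > 0"
  unfolding Ga_kernel_def by auto
lemma BetaPrime_kernel_pos: "x > 0 \<Longrightarrow> BetaPrime_kernel A B x > 0"
  unfolding BetaPrime_kernel_def by auto

lemma F_Ga_plus_eq: "F_Ga_plus = F_KGa_A 0"
  by (auto simp: fun_eq_iff F_Ga_plus_def F_KGa_A_def split: prod.split)

theorem corollary5p2:
  fixes M :: "'a measure" and lam a b :: real
  assumes M: "prob_space M"
    and lam: "lam < 0" and a: "a > 0" and b: "b > 0" and lb: "- b < lam / 2"
  shows
   "(\<forall>(eps::real) (X::'a \<Rightarrow> real) (Y::'a \<Rightarrow> real). 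
        eps > 0 \<and>
        distributed M lborel X (K_density lam (a * eps) b 1 (1 / eps)) \<and>
        distributed M lborel Y (Ga_density (- lam) (a * eps)) \<and>
        prob_space.indep_var M borel X borel Y \<longrightarrow>
        (let U = (\<lambda>\<omega>. fst (F_KGa_A eps (X \<omega>, Y \<omega>)));
             V = (\<lambda>\<omega>. snd (F_KGa_A eps (X \<omega>, Y \<omega>)))
         in prob_space.indep_var M borel U borel V \<and>
            distributed M lborel U (K_density (- lam) (a * eps) b 1 (1 / eps)) \<and>
            distributed M lborel V (BetaPrime_density (b + lam / 2) (- lam))))
    \<and>
    (\<forall>(X::'a \<Rightarrow> real) (Y::'a \<Rightarrow> real).
        distributed M lborel X (Ga_density (b + lam / 2) a) \<and>
        distributed M lborel Y (Ga_density (- lam) a) \<and>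
        prob_space.indep_var M borel X borel Y \<longrightarrow>
        (let U = (\<lambda>\<omega>. fst (F_Ga_plus (X \<omega>, Y \<omega>)));
             V = (\<lambda>\<omega>. snd (F_Ga_plus (X \<omega>, Y \<omega>)))
         in prob_space.indep_var M borel U borel V \<and>
            distributed M lborel U (Ga_density (b - lam / 2) a) \<and>
            distributed M lborel V (BetaPrime_density (b + lam / 2) (- lam))))"
proof (intro conjI allI impI)
  fix eps :: real and X Y :: "'a \<Rightarrow> real"
  assume H: "eps > 0 \<and> distributed M lborel X (K_density lam (a * eps) b 1 (1 / eps)) \<and>
        distributed M lborel Y (Ga_density (- lam) (a * eps)) \<and> prob_space.indep_var M borel X borel Y"
  then have e: "eps > 0" and dX: "distributed M lborel X (normalized_density (K_kernel lam (a * eps) b 1 (1 / eps)))"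
    and dY: "distributed M lborel Y (normalized_density (Ga_kernel (- lam) (a * eps)))"
    and ind: "prob_space.indep_var M borel X borel Y"
    by (auto simp: K_density_def Ga_density_def)
  have c: "a * eps > 0" using a e by simp
  show "let U = (\<lambda>\<omega>. fst (F_KGa_A eps (X \<omega>, Y \<omega>)));
             V = (\<lambda>\<omega>. snd (F_KGa_A eps (X \<omega>, Y \<omega>)))
         in prob_space.indep_var M borel U borel V \<and>
            distributed M lborel U (K_density (- lam) (a * eps) b 1 (1 / eps)) \<and>
            distributed M lborel V (BetaPrime_density (b + lam / 2) (- lam))"
    unfolding K_density_def BetaPrime_density_def
    by (rule final_generic[OF M _ dX dY ind _ _ _ _ K_kernel_nonneg Ga_kernel_nonneg K_kernel_nonneg BetaPrime_kernel_nonneg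
          K_kernel_zero Ga_kernel_zero K_kernel_zero BetaPrime_kernel_zero K_kernel_pos BetaPrime_kernel_pos
          ptA[OF e c b lam lb]]) (use e in auto)
next
  fix X Y :: "'a \<Rightarrow> real"
  assume H: "distributed M lborel X (Ga_density (b + lam / 2) a) \<and>
        distributed M lborel Y (Ga_density (- lam) a) \<and> prob_space.indep_var M borel X borel Y"
  then have dX: "distributed M lborel X (normalized_density (Ga_kernel (b + lam / 2) a))"
    and dY: "distributed M lborel Y (normalized_density (Ga_kernel (- lam) a))"
    and ind: "prob_space.indep_var M borel X borel Y"
    by (auto simp: Ga_density_def)
  show "let U = (\<lambda>\<omega>. fst (F_Ga_plus (X \<omega>, Y \<omega>)));
             V = (\<lambda>\<omega>. snd (F_Ga_plus (X \<omega>, Y \<omega>)))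
         in prob_space.indep_var M borel U borel V \<and>
            distributed M lborel U (Ga_density (b - lam / 2) a) \<and>
            distributed M lborel V (BetaPrime_density (b + lam / 2) (- lam))"
    unfolding Ga_density_def BetaPrime_density_def F_Ga_plus_eq
    by (rule final_generic[OF M _ dX dY ind _ _ _ _ Ga_kernel_nonneg Ga_kernel_nonneg Ga_kernel_nonneg BetaPrime_kernel_nonneg
          Ga_kernel_zero Ga_kernel_zero Ga_kernel_zero BetaPrime_kernel_zero Ga_kernel_pos BetaPrime_kernel_pos
          ptB[OF a b lam lb]]) auto
qed


end
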